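(* Let $k\ge2$, $n>2^k$ and $c=2^k-2$. For every $v\in V\setminus\{1\}$ there exists a search strategy $T_v\in\mathcal{T}_k$ with $$C(T_v)=\begin{cases}[v\oplus(c+1)]&\text{if }\{0,n-1\}\cap[v\oplus(c+1)]\neq\emptyset,\\ [v\oplus c]&\text{otherwise.}\end{cases}$$
   Context: $G$ is the path graph with $V=\{0,\dots,n-1\}$ and edges $\{v,v+1\}$. A search strategy for a tree $H$ is a rooted binary tree defined recursively: a single node is a search strategy for any $H$; otherwise the root is labeled with an edge $uv$ of $H$ and its two child subtrees are search strategies for the components $H_u,H_v$ of $H-uv$ containing $u,v$. Nodes get vertex sets: the root gets $V(H)$, the children of a root labeled $uv$ get $V(H_u),V(H_v)$, recursively. $C(T)$ is the set of $v$ with $V(\lambda)=\{v\}$ for a leaf $\lambda$. $\mathcal{T}_k$ is the set of search strategies for $G$ of height at most $k$. $[u\oplus\ell]=\{w\bmod n: u\le w\le u+\ell-1\}$. *)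

theory Defs
  imports Main
begin

text \<open>Search strategies for the path graph G on V = {0..n-1} with edges {v,v+1}.
Every subgraph H arising in the recursion is a subpath with vertex set {a..b}.
A node labelled e stands for the edge {e, e+1}; its left child is a strategy
for the component {a..e} (containing e), its right child for {e+1..b}
(containing e+1).\<close>

datatype stree = Leaf | Node nat stree stree

fun is_strategy :: "nat \<Rightarrow> nat \<Rightarrow> stree \<Rightarrow> bool" where
  "is_strategy a b Leaf = True"
| "is_strategy a b (Node e l r) =
     (a \<le> e \<and> e < b \<and> is_strategy a e l \<and> is_strategy (Suc e) b r)"

fun leaf_sets :: "nat \<Rightarrow> nat \<Rightarrow> stree \<Rightarrow> nat set set" where
  "leaf_sets a b Leaf = {{a..b}}"
| "leaf_sets a b (Node e l r) = leaf_sets a e l \<union> leaf_sets (Suc e) b r"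

fun height :: "stree \<Rightarrow> nat" where
  "height Leaf = 0"
| "height (Node e l r) = Suc (max (height l) (height r))"

definition C_set :: "nat \<Rightarrow> stree \<Rightarrow> nat set" where
  "C_set n T = {v. {v} \<in> leaf_sets 0 (n - 1) T}"

definition strategies :: "nat \<Rightarrow> nat \<Rightarrow> stree set" where
  "strategies n k = {T. is_strategy 0 (n - 1) T \<and> height T \<le> k}"

definition cyc_int :: "nat \<Rightarrow> nat \<Rightarrow> nat \<Rightarrow> nat set" where
  "cyc_int n u l = {w mod n | w. u \<le> w \<and> w < u + l}"

end

theory Submission
  imports Defs
begin


lemma sing_iff: "{v} = {a..b::nat} \<longleftrightarrow> a = v \<and> b = v"
  by (metis atLeastAtMost_singleton_iff)

lemma split_list_sorted:
  fixes E :: "nat set"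
  assumes "finite E" "E \<noteq> {}"
  obtains EL e ER where "E = EL \<union> {e} \<union> ER" "\<forall>x\<in>EL. x < e" "\<forall>x\<in>ER. e < x"
    "2 * card EL \<le> card E" "2 * card ER < card E"
proof -
  define xs where "xs = sorted_list_of_set E"
  have sw: "sorted_wrt (<) xs" and lx: "length xs = card E" and sx: "set xs = E"
    using assms by (auto simp: xs_def)
  define i where "i = length xs div 2"
  have il: "i < length xs" using assms lx by (simp add: i_def card_gt_0_iff)
  have dec: "xs = take i xs @ xs ! i # drop (Suc i) xs" using il by (simp add: id_take_nth_drop)
  have sw2: "sorted_wrt (<) (take i xs @ xs ! i # drop (Suc i) xs)" using sw dec by simp
  show ?thesis
  proof (rule that[of "set (take i xs)" "xs ! i" "set (drop (Suc i) xs)"])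
    show "E = set (take i xs) \<union> {xs ! i} \<union> set (drop (Suc i) xs)"
      using sx dec by (metis Un_insert_right list.simps(15) set_append sup_bot.right_neutral insert_is_Un Un_assoc Un_commute)
    show "\<forall>x\<in>set (take i xs). x < xs ! i" using sw2 by (simp add: sorted_wrt_append)
    show "\<forall>x\<in>set (drop (Suc i) xs). xs ! i < x" using sw2 by (simp add: sorted_wrt_append)
    have "card (set (take i xs)) \<le> i" using card_length[of "take i xs"] by simp
    then show "2 * card (set (take i xs)) \<le> card E" using lx i_def by linarith
    have "card (set (drop (Suc i) xs)) \<le> length xs - Suc i" using card_length[of "drop (Suc i) xs"] by simp
    then show "2 * card (set (drop (Suc i) xs)) < card E" using lx i_def il by linarith
  qed
qed

lemma gen:
  "finite E \<Longrightarrow> E \<subseteq> {a..<b} \<Longrightarrow> card E < 2 ^ h \<Longrightarrow> a \<le> b \<Longrightarrow>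
   \<exists>T. is_strategy a b T \<and> height T \<le> h \<and>
     (\<forall>v. {v} \<in> leaf_sets a b T \<longleftrightarrow>
        a \<le> v \<and> v \<le> b \<and> (v = a \<or> (a < v \<and> v - 1 \<in> E)) \<and> (v = b \<or> v \<in> E))"
proof (induction h arbitrary: a b E)
  case 0
  then have "E = {}" by simp
  then show ?case
    by (intro exI[of _ Leaf]) (auto simp: sing_iff)
next
  case (Suc h)
  show ?case
  proof (cases "E = {}")
    case True
    then show ?thesis using Suc.prems
      by (intro exI[of _ Leaf]) (auto simp: sing_iff)
  next
    case False
    obtain EL e ER where E: "E = EL \<union> {e} \<union> ER" and L: "\<forall>x\<in>EL. x < e" and R: "\<forall>x\<in>ER. e < x"
      and cL: "2 * card EL \<le> card E" and cR: "2 * card ER < card E"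
      using split_list_sorted[OF Suc.prems(1) False] by blast
    have eab: "a \<le> e" "e < b" using E Suc.prems(2) by auto
    have fL: "finite EL" "finite ER" using E Suc.prems(1) by auto
    have sL: "EL \<subseteq> {a..<e}" using E L Suc.prems(2) by auto
    have sR: "ER \<subseteq> {Suc e..<b}" using E R Suc.prems(2) by (force simp: Suc_le_eq subset_iff)
    have cL': "card EL < 2 ^ h" using cL Suc.prems(3) by simp
    have cR': "card ER < 2 ^ h" using cR Suc.prems(3) by simp
    obtain l where l: "is_strategy a e l" "height l \<le> h"
      "\<forall>v. {v} \<in> leaf_sets a e l \<longleftrightarrow>
        a \<le> v \<and> v \<le> e \<and> (v = a \<or> (a < v \<and> v - 1 \<in> EL)) \<and> (v = e \<or> v \<in> EL)"
      using Suc.IH[OF fL(1) sL cL'] eab by blast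
    obtain r where r: "is_strategy (Suc e) b r" "height r \<le> h"
      "\<forall>v. {v} \<in> leaf_sets (Suc e) b r \<longleftrightarrow>
        Suc e \<le> v \<and> v \<le> b \<and> (v = Suc e \<or> (Suc e < v \<and> v - 1 \<in> ER)) \<and> (v = b \<or> v \<in> ER)"
      using Suc.IH[OF fL(2) sR cR'] eab by fastforce
    show ?thesis
    proof (intro exI[of _ "Node e l r"] conjI allI)
      show "is_strategy a b (Node e l r)" using l r eab by simp
      show "height (Node e l r) \<le> Suc h" using l r by simp
      fix v
      show "{v} \<in> leaf_sets a b (Node e l r) \<longleftrightarrow>
        a \<le> v \<and> v \<le> b \<and> (v = a \<or> (a < v \<and> v - 1 \<in> E)) \<and> (v = b \<or> v \<in> E)"
        using l(3) r(3) E L R sL sR eab Suc.prems(2)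
        apply simp
        apply (cases "v \<le> e")
         apply (auto; fastforce)
        apply (auto; fastforce)
        done
    qed
  qed
qed


lemma cyc_eq:
  assumes "v < n" "l \<le> n"
  shows "cyc_int n v l = (if v + l \<le> n then {v..<v+l} else {v..<n} \<union> {..<v+l-n})"
proof (rule set_eqI)
  fix x
  show "x \<in> cyc_int n v l \<longleftrightarrow> x \<in> (if v + l \<le> n then {v..<v+l} else {v..<n} \<union> {..<v+l-n})"
  proof
    assume "x \<in> cyc_int n v l"
    then obtain w where w: "v \<le> w" "w < v + l" "x = w mod n" by (auto simp: cyc_int_def)
    show "x \<in> (if v + l \<le> n then {v..<v+l} else {v..<n} \<union> {..<v+l-n})"
    proof (cases "w < n")
      case True
      then show ?thesis using w by auto
    next
      case False
      then have "x = w - n" using w assms by (simp add: le_mod_geq)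
      then show ?thesis using w assms False by auto
    qed
  next
    assume x: "x \<in> (if v + l \<le> n then {v..<v+l} else {v..<n} \<union> {..<v+l-n})"
    show "x \<in> cyc_int n v l"
    proof (cases "v \<le> x \<and> x < n")
      case True
      then show ?thesis using x unfolding cyc_int_def
        by (intro CollectI exI[of _ x]) (auto split: if_splits)
    next
      case False
      then have "x < v + l - n" "v + l > n" using x assms by (auto split: if_splits)
      then show ?thesis using assms unfolding cyc_int_def
        by (intro CollectI exI[of _ "x + n"]) auto
    qed
  qed
qed

lemma C_set_E:
  assumes "finite E" "E \<subseteq> {0..<n-1}" "card E < 2 ^ k"
  shows "\<exists>T \<in> strategies n k. C_set n T =
     {v. v \<le> n - 1 \<and> (v = 0 \<or> (0 < v \<and> v - 1 \<in> E)) \<and> (v = n - 1 \<or> v \<in> E)}"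
proof -
  obtain T where T: "is_strategy 0 (n-1) T" "height T \<le> k"
     "\<forall>v. {v} \<in> leaf_sets 0 (n-1) T \<longleftrightarrow>
        0 \<le> v \<and> v \<le> n-1 \<and> (v = 0 \<or> (0 < v \<and> v - 1 \<in> E)) \<and> (v = n-1 \<or> v \<in> E)"
    using gen[OF assms] by blast
  show ?thesis using T by (intro bexI[of _ T]) (auto simp: strategies_def C_set_def)
qed

theorem corollary3p1:
  fixes n k c v :: nat
  assumes "k \<ge> 2" and "n > 2 ^ k" and "c = 2 ^ k - 2"
    and "v \<in> {0..<n} - {1}"
  shows "\<exists>T \<in> strategies n k.
           C_set n T = (if {0, n - 1} \<inter> cyc_int n v (c + 1) \<noteq> {}
                        then cyc_int n v (c + 1) else cyc_int n v c)"
proof -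
  have "(2::nat) ^ 2 \<le> 2 ^ k" using assms(1) by (intro power_increasing) auto
  then have p4: "(4::nat) \<le> 2 ^ k" by simp
  have c2: "c + 2 = 2 ^ k" "c \<ge> 2" using assms(3) p4 by auto
  have n3: "n \<ge> c + 3" using c2 assms(2) by linarith
  have v: "v < n" "v \<noteq> 1" using assms(4) by auto
  have cyc1: "cyc_int n v (c+1) = (if v + (c+1) \<le> n then {v..<v+(c+1)} else {v..<n} \<union> {..<v+(c+1)-n})"
    using cyc_eq[of v n "c+1"] v n3 by simp
  have cyc0: "cyc_int n v c = (if v + c \<le> n then {v..<v+c} else {v..<n} \<union> {..<v+c-n})"
    using cyc_eq[of v n c] v n3 by simp
  consider (A1) "v = 0" | (A2) "v \<noteq> 0" "v + c + 1 = n" | (A3) "v \<noteq> 0" "v + c + 1 < n"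
    | (B) "v + c + 1 > n" by linarith
  then show ?thesis
  proof cases
    case A1
    have S: "(if {0, n - 1} \<inter> cyc_int n v (c + 1) \<noteq> {}
                        then cyc_int n v (c + 1) else cyc_int n v c) = {0..<c+1}"
      using cyc1 A1 n3 by auto
    have cE: "card {0..c} < 2 ^ k" using c2 by simp
    have sE: "{0..c} \<subseteq> {0..<n-1}" using n3 by auto
    obtain T where T: "T \<in> strategies n k" "C_set n T =
     {w. w \<le> n - 1 \<and> (w = 0 \<or> (0 < w \<and> w - 1 \<in> {0..c})) \<and> (w = n - 1 \<or> w \<in> {0..c})}"
      using C_set_E[OF finite_atLeastAtMost sE cE] by blast
    have "C_set n T = {0..<c+1}" unfolding T(2) using n3 by auto
    then show ?thesis using T(1) S by auto
  next
    case A2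
    have S: "(if {0, n - 1} \<inter> cyc_int n v (c + 1) \<noteq> {}
                        then cyc_int n v (c + 1) else cyc_int n v c) = {v..<n}"
      using cyc1 A2 n3 by auto
    have cE: "card {v-1..<n-1} < 2 ^ k" using c2 A2 by simp
    have sE: "{v-1..<n-1} \<subseteq> {0..<n-1}" by auto
    obtain T where T: "T \<in> strategies n k" "C_set n T =
     {w. w \<le> n - 1 \<and> (w = 0 \<or> (0 < w \<and> w - 1 \<in> {v-1..<n-1})) \<and> (w = n - 1 \<or> w \<in> {v-1..<n-1})}"
      using C_set_E[OF finite_atLeastLessThan sE cE] by blast
    have "C_set n T = {v..<n}" unfolding T(2) using n3 A2 v by auto
    then show ?thesis using T(1) S by auto
  next
    case A3
    have S: "(if {0, n - 1} \<inter> cyc_int n v (c + 1) \<noteq> {}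
                        then cyc_int n v (c + 1) else cyc_int n v c) = {v..<v+c}"
      using cyc1 cyc0 A3 n3 by auto
    have cE: "card {v-1..v+c-1} < 2 ^ k" using c2 A3 by simp
    have sE: "{v-1..v+c-1} \<subseteq> {0..<n-1}" using A3 by auto
    obtain T where T: "T \<in> strategies n k" "C_set n T =
     {w. w \<le> n - 1 \<and> (w = 0 \<or> (0 < w \<and> w - 1 \<in> {v-1..v+c-1})) \<and> (w = n - 1 \<or> w \<in> {v-1..v+c-1})}"
      using C_set_E[OF finite_atLeastAtMost sE cE] by blast
    have "C_set n T = {v..<v+c}" unfolding T(2) using n3 A3 v by auto
    then show ?thesis using T(1) S by auto
  next
    case B
    have S: "(if {0, n - 1} \<inter> cyc_int n v (c + 1) \<noteq> {}
                        then cyc_int n v (c + 1) else cyc_int n v c) = {v..<n} \<union> {..<v+c+1-n}"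
      using cyc1 B n3 v by auto
    define E where "E = {..<v+c+1-n} \<union> {v-1..<n-1}"
    have fE: "finite E" unfolding E_def by simp
    have dj: "{..<v+c+1-n} \<inter> {v-1..<n-1} = {}" using B n3 by auto
    have "card E = (v+c+1-n) + (n-1-(v-1))" unfolding E_def
      using card_Un_disjoint[OF finite_lessThan finite_atLeastLessThan dj] by simp
    then have cE: "card E < 2 ^ k" using c2 B v by simp
    have sE: "E \<subseteq> {0..<n-1}" unfolding E_def using B n3 v by auto
    obtain T where T: "T \<in> strategies n k" "C_set n T =
     {w. w \<le> n - 1 \<and> (w = 0 \<or> (0 < w \<and> w - 1 \<in> E)) \<and> (w = n - 1 \<or> w \<in> E)}"
      using C_set_E[OF fE sE cE] by blast
    have "C_set n T = {v..<n} \<union> {..<v+c+1-n}" unfolding T(2) E_def using n3 B v by auto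
    then show ?thesis using T(1) S by auto
  qed
qed

end
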